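(* Let $n\ge4$, $k=3$, $d$ an integer, and let $A_c=(\alpha_c,n_1,d_1,k_1,n_2,d_2,k_2)$ be an allowable critical data set for type $(n,d,3)$ with $k_1=2$, $k_2=1$. Then $C_{21}>0$, except in the following four cases, where $C_{21}=0$: (a) $(n_1,n_2,d_1,d_2)=(4,3,7,6)$, $\alpha_c=\frac32$; (b) $(n_1,n_2,d_1,d_2)=(3,3,5,6)$, $\alpha_c=1$; (c) $(n_1,n_2,d_1,d_2)=(2,3,3,6)$, $\alpha_c=\frac34$; (d) $(n_1,n_2,d_1,d_2)=(1,3,1,6)$, $\alpha_c=\frac35$.
   Context: Let $0<k<n$ and $d$ be integers. Write $d=na-t$ with integers $a,t$, $0\le t<n$, and $ka=l(n-k)+t+m$ with integers $l,m$, $0\le m<n-k$. A critical data set for type $(n,d,k)$ is a tuple $A_c=(\alpha_c,n_1,d_1,k_1,n_2,d_2,k_2)$ with integers $n_i\ge1$, $k_i\ge0$, $d_i$ such that $n_1+n_2=n$, $d_1+d_2=d$, $k_1+k_2=k$, $\frac{d_2}{n_2}>\frac{d_1}{n_1}$, $\frac{k_1}{n_1}>\frac{k_2}{n_2}$, and $\alpha_c=\frac{d_2n_1-d_1n_2}{n_2k_1-n_1k_2}$. It is allowable if moreover $\frac tk<\alpha_c<\frac{ln+t}{k}$, $d\ge\frac1k(n^2-1)-(n-k)$, $d_1\ge\frac1{k_1}(n_1^2-1)-(n_1-k_1)$, and either ($k_2=0$ and $n_2=1$) or ($k_2\ge1$ and $d_2\ge\frac1{k_2}(n_2^2-1)-(n_2-k_2)$).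 Define $C_{21}=-n_1n_2+d_2n_1-d_1n_2+k_2(d_1+n_1-k_1)$. *)

theory Defs
  imports Complex_Main
begin

text \<open>For type (n,d,k) with 0<k<n: write d = n a - t with 0 \<le> t < n,
  and k a = l (n-k) + t + m with 0 \<le> m < n-k.\<close>

definition t_of :: "int \<Rightarrow> int \<Rightarrow> int" where
  "t_of n d = (- d) mod n"

definition a_of :: "int \<Rightarrow> int \<Rightarrow> int" where
  "a_of n d = (d + t_of n d) div n"

definition l_of :: "int \<Rightarrow> int \<Rightarrow> int \<Rightarrow> int" where
  "l_of n d k = (k * a_of n d - t_of n d) div (n - k)"

definition m_of :: "int \<Rightarrow> int \<Rightarrow> int \<Rightarrow> int" where
  "m_of n d k = (k * a_of n d - t_of n d) mod (n - k)"

definition critical_data_set ::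
  "int \<Rightarrow> int \<Rightarrow> int \<Rightarrow> real \<Rightarrow> int \<Rightarrow> int \<Rightarrow> int \<Rightarrow> int \<Rightarrow> int \<Rightarrow> int \<Rightarrow> bool" where
  "critical_data_set n d k \<alpha>c n1 d1 k1 n2 d2 k2 \<longleftrightarrow>
     n1 \<ge> 1 \<and> n2 \<ge> 1 \<and> k1 \<ge> 0 \<and> k2 \<ge> 0 \<and>
     n1 + n2 = n \<and> d1 + d2 = d \<and> k1 + k2 = k \<and>
     real_of_int d2 / real_of_int n2 > real_of_int d1 / real_of_int n1 \<and>
     real_of_int k1 / real_of_int n1 > real_of_int k2 / real_of_int n2 \<and>
     \<alpha>c = real_of_int (d2 * n1 - d1 * n2) / real_of_int (n2 * k1 - n1 * k2)"

definition allowable_critical_data_set ::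
  "int \<Rightarrow> int \<Rightarrow> int \<Rightarrow> real \<Rightarrow> int \<Rightarrow> int \<Rightarrow> int \<Rightarrow> int \<Rightarrow> int \<Rightarrow> int \<Rightarrow> bool" where
  "allowable_critical_data_set n d k \<alpha>c n1 d1 k1 n2 d2 k2 \<longleftrightarrow>
     critical_data_set n d k \<alpha>c n1 d1 k1 n2 d2 k2 \<and>
     real_of_int (t_of n d) / real_of_int k < \<alpha>c \<and>
     \<alpha>c < real_of_int (l_of n d k * n + t_of n d) / real_of_int k \<and>
     real_of_int d \<ge> (real_of_int n ^ 2 - 1) / real_of_int k - real_of_int (n - k) \<and>
     real_of_int d1 \<ge> (real_of_int n1 ^ 2 - 1) / real_of_int k1 - real_of_int (n1 - k1) \<and>
     ((k2 = 0 \<and> n2 = 1) \<or>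
      (k2 \<ge> 1 \<and> real_of_int d2 \<ge> (real_of_int n2 ^ 2 - 1) / real_of_int k2 - real_of_int (n2 - k2)))"

definition C21 :: "int \<Rightarrow> int \<Rightarrow> int \<Rightarrow> int \<Rightarrow> int \<Rightarrow> int \<Rightarrow> int" where
  "C21 n1 d1 k1 n2 d2 k2 = - n1 * n2 + d2 * n1 - d1 * n2 + k2 * (d1 + n1 - k1)"

end

theory Submission
  imports Defs
begin

lemma core:
  fixes x y n d d1 d2 t a D e s :: int
  assumes x1: "x \<ge> 1" and y1: "y \<ge> 1" and nxy: "n = x + y" and n4: "n \<ge> 4"
    and s_def: "s = 2*y - x" and s1: "s \<ge> 1"
    and D_def: "D = d2*x - d1*y" and D1: "D \<ge> 1"
    and hd1: "2*d1 \<ge> x^2 - 2*x + 3" and e_def: "e = d2 - y^2 + y" and e0: "e \<ge> 0"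
    and dd: "d = d1 + d2" and hd: "3*d \<ge> n^2 - 1 - 3*(n-3)"
    and ta: "d + t = n*a" and t0: "0 \<le> t" and tn: "t < n" and al: "s*t < 3*D"
    and C0: "(y-1)*D + x*e \<le> 2*y"
  shows "y = 3 \<and> d2 = 6 \<and> ((x = 1 \<and> d1 = 1) \<or> (x = 2 \<and> d1 = 3) \<or> (x = 3 \<and> d1 = 5) \<or> (x = 4 \<and> d1 = 7))"
proof -
  define q where "q = y*a - d2"
  have tt: "t = (x+y)*a - (d1+d2)" using ta dd nxy by simp
  have tq: "y*t - D = n*q" unfolding q_def D_def tt nxy by (simp add: algebra_simps)
  have "s = 3*y - n" using s_def nxy by simp
  hence st: "s*t = 3*(y*t) - n*t" by (simp add: left_diff_distrib)
  have tq3: "3*(y*t) - 3*D = 3*(n*q)" using tq by simp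
  hence "n*t > 3*(n*q)" using al st by linarith
  hence "n*t > n*(3*q)" by (simp add: algebra_simps)
  hence "t > 3*q" using n4 by simp
  hence "3*q \<le> t - 1" by simp
  hence "n*(3*q) \<le> n*(t-1)" using n4 by (intro mult_left_mono) auto
  hence "3*(n*q) \<le> n*t - n" by (simp add: algebra_simps)
  hence key: "s*t + n \<le> 3*D" using tq3 st by linarith
  have st0: "s*t \<ge> 0" using s1 t0 by simp
  have "x*e \<ge> 0" using x1 e0 by simp
  hence A: "(y-1)*D \<le> 2*y" using C0 by linarith
  have "3*D \<ge> y + 2"
  proof (cases "t = 0")
    case True
    hence "D = - n*q" using tq by simp
    moreover have "q < 0" using True \<open>t > 3*q\<close> by simp
    hence "q \<le> -1" by simp
    hence "n*q \<le> n*(-1)" using n4 by (intro mult_left_mono) auto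
    ultimately have "D \<ge> n" by simp
    thus ?thesis using nxy x1 n4 by linarith
  next
    case False
    hence "t \<ge> 1" using t0 by simp
    hence "1*1 \<le> s*t" using s1 by (intro mult_mono) auto
    hence "s*t \<ge> 1" by simp
    thus ?thesis using key nxy x1 by linarith
  qed
  hence "(y-1)*(y+2) \<le> (y-1)*(3*D)" using y1 by (intro mult_left_mono) auto
  also have "\<dots> \<le> 6*y" using A by linarith
  finally have B: "(y-1)*(y+2) \<le> 6*y" .
  have "y \<le> 5"
  proof (rule ccontr)
    assume "\<not> y \<le> 5"
    hence "y*6 \<le> y*y" using y1 by (intro mult_left_mono) auto
    moreover have "(y-1)*(y+2) = y*y + y - 2" by (simp add: algebra_simps)
    ultimately show False using B \<open>\<not> y \<le> 5\<close> by linarith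
  qed
  hence yc: "y \<in> {1..5}" using y1 by auto
  have xle: "x \<le> 2*y - 1" using s1 s_def by simp
  have t1: "t \<ge> 1 \<Longrightarrow> 3*y \<le> 3*D"
  proof -
    assume "t \<ge> 1"
    hence "s*1 \<le> s*t" using s1 by (intro mult_left_mono) auto
    thus ?thesis using key s_def nxy by linarith
  qed
  have t0D: "t = 0 \<Longrightarrow> D \<ge> n"
  proof -
    assume "t = 0"
    hence "D = - n*q" using tq by simp
    moreover have "q < 0" using \<open>t = 0\<close> \<open>t > 3*q\<close> by simp
    hence "q \<le> -1" by simp
    hence "n*q \<le> n*(-1)" using n4 by (intro mult_left_mono) auto
    ultimately show "D \<ge> n" by simp
  qed
  have y4: "y \<le> 3"
  proof (rule ccontr)
    assume "\<not> y \<le> 3"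
    have "D \<le> 2"
    proof (rule ccontr)
      assume "\<not> D \<le> 2"
      hence "(y-1)*3 \<le> (y-1)*D" using y1 by (intro mult_left_mono) auto
      moreover have "(y-1)*3 = 3*y-3" by simp
      ultimately show False using A \<open>\<not> y \<le> 3\<close> by linarith
    qed
    thus False using t1 t0D t0 nxy x1 \<open>\<not> y \<le> 3\<close> by linarith
  qed
  have "y \<noteq> 1" using xle nxy n4 by auto
  hence "y = 2 \<or> y = 3" using y1 y4 by auto
  thus ?thesis
  proof (elim disjE)
    assume y2: "y = 2"
    have Dx: "D + x*e \<le> 4" using C0 y2 by simp
    have e2: "e = d2 - 2" using e_def y2 by (simp add: power2_eq_square)
    have "x = 2 \<or> x = 3" using xle y2 nxy n4 by auto
    hence False
    proof (elim disjE)
      assume x2: "x = 2"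
      have "2*d2 - 2*d1 \<ge> 1" using D_def D1 x2 y2 by (simp add: algebra_simps)
      hence i1: "d2 \<ge> d1 + 1" by presburger
      have "2*d1 \<ge> 3" using hd1 x2 by (simp add: power2_eq_square)
      hence i2: "d1 \<ge> 2" by presburger
      have i3: "2*d2 - 2*d1 + 2*(d2 - 2) \<le> 4" using Dx D_def x2 y2 e2 by (simp add: algebra_simps)
      have "d1 = 2" using i1 i2 i3 by presburger
      moreover have "d2 = 3" using i1 i2 i3 by presburger
      ultimately have "d = 5" "D = 2" using dd D_def x2 y2 by simp_all
      hence "5 + t = 4*a" "2*t < 6" using ta al s_def x2 y2 nxy by simp_all
      thus False using t0 by presburger
    next
      assume x3: "x = 3"
      have i1: "3*d2 - 2*d1 \<ge> 1" using D_def D1 x3 y2 by (simp add: algebra_simps)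
      have i2: "d1 \<ge> 3" using hd1 x3 by (simp add: power2_eq_square)
      have i3: "3*d2 - 2*d1 + 3*(d2 - 2) \<le> 4" using Dx D_def x3 y2 e2 by (simp add: algebra_simps)
      have "d1 = 4 \<and> d2 = 3" using i1 i2 i3 by presburger
      hence "d = 7" "D = 1" using dd D_def x3 y2 by simp_all
      hence "7 + t = 5*a" "t < 3" using ta al s_def x3 y2 nxy by simp_all
      thus False using t0 by presburger
    qed
    thus ?thesis ..
  next
    assume y3: "y = 3"
    have "D \<le> 3" using A y3 by simp
    hence "t \<noteq> 0" using t0D nxy x1 y3 by auto
    hence "D = 3" using t1 t0 y3 \<open>D \<le> 3\<close> by simp
    hence "x*e \<le> 0" using C0 y3 by simp
    moreover have "e \<le> x*e" using x1 e0 by (simp add: mult_right_mono[of 1 x e, simplified])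
    ultimately have "e = 0" using e0 by simp
    hence d26: "d2 = 6" using e_def y3 by (simp add: power2_eq_square)
    hence d1x: "d1 = 2*x - 1" using D_def \<open>D = 3\<close> y3 by simp
    have "x \<le> 5" using xle y3 by simp
    moreover have "x \<noteq> 5"
    proof
      assume "x = 5"
      thus False using hd dd d26 d1x nxy y3 by (simp add: power2_eq_square)
    qed
    ultimately have "x = 1 \<or> x = 2 \<or> x = 3 \<or> x = 4" using x1 by auto
    thus ?thesis using y3 d26 d1x by auto
  qed
qed


theorem proposition7p3:
  fixes n d n1 d1 n2 d2 :: int and \<alpha>c :: real
  assumes "n \<ge> 4"
    and "allowable_critical_data_set n d 3 \<alpha>c n1 d1 2 n2 d2 1"
  shows "(if ((n1, n2, d1, d2) = (4, 3, 7, 6) \<and> \<alpha>c = 3/2) \<or>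
             ((n1, n2, d1, d2) = (3, 3, 5, 6) \<and> \<alpha>c = 1) \<or>
             ((n1, n2, d1, d2) = (2, 3, 3, 6) \<and> \<alpha>c = 3/4) \<or>
             ((n1, n2, d1, d2) = (1, 3, 1, 6) \<and> \<alpha>c = 3/5)
         then C21 n1 d1 2 n2 d2 1 = 0
         else C21 n1 d1 2 n2 d2 1 > 0)"
proof -
  note H = assms(2)[unfolded allowable_critical_data_set_def critical_data_set_def]
  have n1: "n1 \<ge> 1" and n2: "n2 \<ge> 1" and nn: "n1 + n2 = n" and ddd: "d1 + d2 = d"
    using H by auto
  have rn1: "real_of_int n1 > 0" and rn2: "real_of_int n2 > 0" using n1 n2 by simp_all
  have "real_of_int d2 / real_of_int n2 > real_of_int d1 / real_of_int n1" using H by blast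
  hence "real_of_int d1 * real_of_int n2 < real_of_int d2 * real_of_int n1"
    using rn1 rn2 by (simp add: field_simps)
  hence "real_of_int (d1 * n2) < real_of_int (d2 * n1)" by simp
  hence Dpos: "d2*n1 - d1*n2 \<ge> 1" by linarith
  have "real_of_int 2 / real_of_int n1 > real_of_int 1 / real_of_int n2" using H by simp
  hence "real_of_int 1 * real_of_int n1 < real_of_int 2 * real_of_int n2"
    using rn1 rn2 by (simp add: field_simps)
  hence "real_of_int n1 < real_of_int (2 * n2)" by simp
  hence spos: "2*n2 - n1 \<ge> 1" by linarith
  have al: "\<alpha>c = real_of_int (d2 * n1 - d1 * n2) / real_of_int (2*n2 - n1)"
    using H by (simp add: mult.commute)
  have rs: "real_of_int (2*n2 - n1) > 0" using spos by simp
  have "real_of_int (t_of n d) / real_of_int 3 < \<alpha>c" using H by blast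
  hence "real_of_int (t_of n d) / 3 < \<alpha>c" by simp
  hence "real_of_int (t_of n d) * real_of_int (2*n2 - n1) < 3 * real_of_int (d2 * n1 - d1 * n2)"
    unfolding al using rs by (simp add: field_simps)
  hence "real_of_int ((2*n2 - n1) * t_of n d) < real_of_int (3 * (d2 * n1 - d1 * n2))"
    by (simp add: mult.commute)
  hence alI: "(2*n2 - n1) * t_of n d < 3 * (d2 * n1 - d1 * n2)" by linarith
  have "real_of_int d \<ge> (real_of_int n ^ 2 - 1) / 3 - real_of_int (n - 3)" using H by simp
  hence "3 * real_of_int d \<ge> real_of_int n ^ 2 - 1 - 3 * real_of_int (n - 3)" by (simp add: field_simps)
  hence "real_of_int (3*d) \<ge> real_of_int (n^2 - 1 - 3*(n-3))" by simp
  hence hd: "3*d \<ge> n^2 - 1 - 3*(n-3)" by linarith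
  have "real_of_int d1 \<ge> (real_of_int n1 ^ 2 - 1) / 2 - real_of_int (n1 - 2)" using H by simp
  hence "2 * real_of_int d1 \<ge> real_of_int n1 ^ 2 - 1 - 2 * real_of_int (n1 - 2)" by (simp add: field_simps)
  hence "real_of_int (2*d1) \<ge> real_of_int (n1^2 - 1 - 2*(n1-2))" by simp
  hence "2*d1 \<ge> n1^2 - 1 - 2*(n1-2)" by linarith
  hence hd1: "2*d1 \<ge> n1^2 - 2*n1 + 3" by simp
  have "real_of_int d2 \<ge> (real_of_int n2 ^ 2 - 1) / 1 - real_of_int (n2 - 1)" using H by simp
  hence "real_of_int d2 \<ge> real_of_int (n2^2 - 1 - (n2 - 1))" by simp
  hence hd2: "d2 - n2^2 + n2 \<ge> 0" by linarith
  have t0: "0 \<le> t_of n d" and tn: "t_of n d < n" using assms(1) unfolding t_of_def by simp_all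
  have ta: "d + t_of n d = n * (- ((- d) div n))" unfolding t_of_def
    by (simp add: minus_div_mult_eq_mod[symmetric] algebra_simps)
  have Cy: "C21 n1 d1 2 n2 d2 1 * n2 = (n2 - 1)*(d2*n1 - d1*n2) + n1*(d2 - n2^2 + n2) - 2*n2"
    unfolding C21_def by (simp add: algebra_simps power2_eq_square)
  show ?thesis
  proof (cases "((n1, n2, d1, d2) = (4, 3, 7, 6) \<and> \<alpha>c = 3/2) \<or>
             ((n1, n2, d1, d2) = (3, 3, 5, 6) \<and> \<alpha>c = 1) \<or>
             ((n1, n2, d1, d2) = (2, 3, 3, 6) \<and> \<alpha>c = 3/4) \<or>
             ((n1, n2, d1, d2) = (1, 3, 1, 6) \<and> \<alpha>c = 3/5)")
    case True
    thus ?thesis by (auto simp: C21_def)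
  next
    case False
    have "C21 n1 d1 2 n2 d2 1 > 0"
    proof (rule ccontr)
      assume "\<not> C21 n1 d1 2 n2 d2 1 > 0"
      hence "C21 n1 d1 2 n2 d2 1 * n2 \<le> 0" using n2 by (simp add: mult_nonpos_nonneg)
      hence C0: "(n2 - 1)*(d2*n1 - d1*n2) + n1*(d2 - n2^2 + n2) \<le> 2*n2" using Cy by linarith
      have "n2 = 3 \<and> d2 = 6 \<and> ((n1 = 1 \<and> d1 = 1) \<or> (n1 = 2 \<and> d1 = 3) \<or> (n1 = 3 \<and> d1 = 5) \<or> (n1 = 4 \<and> d1 = 7))"
        by (rule core[OF n1 n2 nn[symmetric] assms(1) refl spos refl Dpos hd1 refl hd2 ddd[symmetric] hd ta t0 tn alI C0])
      thus False using False al by auto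
    qed
    thus ?thesis using False by simp
  qed
qed

end
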